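(* Let $\mathfrak g$ be a pre-Lie algebra and $r_1,r_2\in\mathrm{Sym}^2(\mathfrak g)$ two $\mathfrak s$-matrices. If $(\phi,\varphi)$ is a weak homomorphism from $r_2$ to $r_1$, then $(\phi,\varphi)$ is a weak homomorphism from the phase space $(\mathfrak g^c,\mathfrak g^{*c},\omega_p,r_2)$ to the phase space $(\mathfrak g^c,\mathfrak g^{*c},\omega_p,r_1)$; that is, $\varphi^*:(\mathfrak g^*,[\cdot,\cdot]_{r_2})\to(\mathfrak g^*,[\cdot,\cdot]_{r_1})$ is a Lie algebra homomorphism and $\phi+\varphi^*:(\mathfrak g\oplus\mathfrak g^*,[\cdot,\cdot]_{p,r_2})\to(\mathfrak g\oplus\mathfrak g^*,[\cdot,\cdot]_{p,r_1})$ is a Lie algebra homomorphism.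
   Context: A pre-Lie algebra is a finite-dimensional vector space $\mathfrak g$ over a field of characteristic $0$ with product $\cdot$ satisfying $(x\cdot y)\cdot z-x\cdot(y\cdot z)=(y\cdot x)\cdot z-y\cdot(x\cdot z)$; $\mathfrak g^c$ has bracket $[x,y]_{\mathfrak g}=x\cdot y-y\cdot x$. Define $\langle L^*_x\alpha,y\rangle=-\langle\alpha,x\cdot y\rangle$, $\langle R^*_x\alpha,y\rangle=-\langle\alpha,y\cdot x\rangle$, $\mathrm{ad}^*_x=L^*_x-R^*_x$. For $r\in\mathrm{Sym}^2(\mathfrak g)$, $\langle r^\sharp(\alpha),\beta\rangle=r(\alpha,\beta)$; for $r=\sum_ia_i\otimes b_i$, $[r,r]=-\sum a_i\cdot a_j\otimes b_i\otimes b_j+\sum a_i\otimes b_i\cdot a_j\otimes b_j+\sum a_i\otimes a_j\otimes[b_i,b_j]_{\mathfrak g}$; $r$ is an $\mathfrak s$-matrix if $[r,r]=0$. Set $\alpha\cdot_r\beta=\mathrm{ad}^*_{r^\sharp(\alpha)}\beta-R^*_{r^\sharp(\beta)}\alpha$, $[\alpha,\beta]_r=L^*_{r^\sharp(\alpha)}\beta-L^*_{r^\sharp(\beta)}\alpha$, and for $\alpha\in\mathfrak g^*$ define $L^*_\alpha:\mathfrak g\to\mathfrak g$ by $\langle L^*_\alpha x,\beta\rangle=-\langle x,\alpha\cdot_r\beta\rangle$. The phase space $(\mathfrak g^c,\mathfrak g^{*c},\omega_p,r)$ associated to $r$ is $\mathfrak g\oplus\mathfrak g^*$ with the Lie bracket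 $[x+\alpha,y+\beta]_{p,r}=[\alpha,\beta]_r+L^*_x\beta-L^*_y\alpha+L^*_\alpha y-L^*_\beta x+[x,y]_{\mathfrak g}$ and the form $\omega_p(x+\alpha,y+\beta)=\langle\alpha,y\rangle-\langle x,\beta\rangle$. A weak homomorphism from $\mathfrak s$-matrix $r_2$ to $\mathfrak s$-matrix $r_1$ is a pair $(\phi,\varphi)$ with $\phi:\mathfrak g^c\to\mathfrak g^c$ a Lie algebra homomorphism and $\varphi:\mathfrak g\to\mathfrak g$ linear, such that $(\varphi\otimes\mathrm{Id})r_1=(\mathrm{Id}\otimes\phi)r_2$ and $\varphi(\phi(x)\cdot y)=x\cdot\varphi(y)$ for all $x,y\in\mathfrak g$. *)

theory Defs
  imports Main "HOL-Library.Function_Algebras" "HOL-Library.Product_Plus"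
begin

(* The pre-Lie algebra g is k^n, elements are functions 'n => 'k (coordinates w.r.t.
   a fixed basis ev j); the dual g* is also 'n => 'k with the canonical pairing. *)

definition ev :: "'n \<Rightarrow> ('n \<Rightarrow> 'k::zero_neq_one)" where
  "ev j = (\<lambda>i. if i = j then 1 else 0)"

definition smul :: "'k::times \<Rightarrow> ('n \<Rightarrow> 'k) \<Rightarrow> ('n \<Rightarrow> 'k)" where
  "smul c x = (\<lambda>i. c * x i)"

definition pair :: "('n::finite \<Rightarrow> 'k::comm_ring_1) \<Rightarrow> ('n \<Rightarrow> 'k) \<Rightarrow> 'k" where
  "pair \<alpha> x = (\<Sum>i\<in>UNIV. \<alpha> i * x i)"

definition lin :: "(('n \<Rightarrow> 'k::comm_ring_1) \<Rightarrow> ('m \<Rightarrow> 'k)) \<Rightarrow> bool" where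
  "lin f \<longleftrightarrow> (\<forall>x y. f (x + y) = f x + f y) \<and> (\<forall>c x. f (smul c x) = smul c (f x))"

definition bilin :: "(('n \<Rightarrow> 'k::comm_ring_1) \<Rightarrow> ('n \<Rightarrow> 'k) \<Rightarrow> ('n \<Rightarrow> 'k)) \<Rightarrow> bool" where
  "bilin m \<longleftrightarrow> (\<forall>x. lin (m x)) \<and> (\<forall>y. lin (\<lambda>x. m x y))"

definition preLie :: "(('n \<Rightarrow> 'k::comm_ring_1) \<Rightarrow> ('n \<Rightarrow> 'k) \<Rightarrow> ('n \<Rightarrow> 'k)) \<Rightarrow> bool" where
  "preLie m \<longleftrightarrow> bilin m \<and>
     (\<forall>x y z. m (m x y) z - m x (m y z) = m (m y x) z - m y (m x z))"

definition comm :: "(('n \<Rightarrow> 'k::comm_ring_1) \<Rightarrow> ('n \<Rightarrow> 'k) \<Rightarrow> ('n \<Rightarrow> 'k)) \<Rightarrow> ('n \<Rightarrow> 'k) \<Rightarrow> ('n \<Rightarrow> 'k) \<Rightarrow> ('n \<Rightarrow> 'k)" where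
  "comm m x y = m x y - m y x"

(* <L*_x a, y> = - <a, x.y>,  <R*_x a, y> = - <a, y.x> *)
definition Lstar :: "(('n::finite \<Rightarrow> 'k::comm_ring_1) \<Rightarrow> ('n \<Rightarrow> 'k) \<Rightarrow> ('n \<Rightarrow> 'k)) \<Rightarrow> ('n \<Rightarrow> 'k) \<Rightarrow> ('n \<Rightarrow> 'k) \<Rightarrow> ('n \<Rightarrow> 'k)" where
  "Lstar m x \<alpha> = (\<lambda>j. - pair \<alpha> (m x (ev j)))"

definition Rstar :: "(('n::finite \<Rightarrow> 'k::comm_ring_1) \<Rightarrow> ('n \<Rightarrow> 'k) \<Rightarrow> ('n \<Rightarrow> 'k)) \<Rightarrow> ('n \<Rightarrow> 'k) \<Rightarrow> ('n \<Rightarrow> 'k) \<Rightarrow> ('n \<Rightarrow> 'k)" where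
  "Rstar m x \<alpha> = (\<lambda>j. - pair \<alpha> (m (ev j) x))"

definition adstar :: "(('n::finite \<Rightarrow> 'k::comm_ring_1) \<Rightarrow> ('n \<Rightarrow> 'k) \<Rightarrow> ('n \<Rightarrow> 'k)) \<Rightarrow> ('n \<Rightarrow> 'k) \<Rightarrow> ('n \<Rightarrow> 'k) \<Rightarrow> ('n \<Rightarrow> 'k)" where
  "adstar m x \<alpha> = Lstar m x \<alpha> - Rstar m x \<alpha>"

(* r in g (x) g is given by its coefficient matrix: r = sum_{i,j} r i j * ev i (x) ev j *)
definition symm :: "('n \<Rightarrow> 'n \<Rightarrow> 'k) \<Rightarrow> bool" where
  "symm r \<longleftrightarrow> (\<forall>i j. r i j = r j i)"

(* <r#(a), b> = r(a,b) *)
definition rsharp :: "('n::finite \<Rightarrow> 'n \<Rightarrow> 'k::comm_ring_1) \<Rightarrow> ('n \<Rightarrow> 'k) \<Rightarrow> ('n \<Rightarrow> 'k)" where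
  "rsharp r \<alpha> = (\<lambda>j. \<Sum>i\<in>UNIV. \<alpha> i * r i j)"

(* [r,r] in g (x) g (x) g, by components (u,v,w) *)
definition rr :: "(('n::finite \<Rightarrow> 'k::comm_ring_1) \<Rightarrow> ('n \<Rightarrow> 'k) \<Rightarrow> ('n \<Rightarrow> 'k)) \<Rightarrow> ('n \<Rightarrow> 'n \<Rightarrow> 'k) \<Rightarrow> 'n \<Rightarrow> 'n \<Rightarrow> 'n \<Rightarrow> 'k" where
  "rr m r = (\<lambda>u v w.
      - (\<Sum>p\<in>UNIV. \<Sum>s\<in>UNIV. r p v * r s w * m (ev p) (ev s) u)
      + (\<Sum>q\<in>UNIV. \<Sum>s\<in>UNIV. r u q * r s w * m (ev q) (ev s) v)
      + (\<Sum>q\<in>UNIV. \<Sum>t\<in>UNIV. r u q * r v t * comm m (ev q) (ev t) w))"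

definition smatrix :: "(('n::finite \<Rightarrow> 'k::comm_ring_1) \<Rightarrow> ('n \<Rightarrow> 'k) \<Rightarrow> ('n \<Rightarrow> 'k)) \<Rightarrow> ('n \<Rightarrow> 'n \<Rightarrow> 'k) \<Rightarrow> bool" where
  "smatrix m r \<longleftrightarrow> rr m r = (\<lambda>u v w. 0)"

definition dot_r :: "(('n::finite \<Rightarrow> 'k::comm_ring_1) \<Rightarrow> ('n \<Rightarrow> 'k) \<Rightarrow> ('n \<Rightarrow> 'k)) \<Rightarrow> ('n \<Rightarrow> 'n \<Rightarrow> 'k) \<Rightarrow> ('n \<Rightarrow> 'k) \<Rightarrow> ('n \<Rightarrow> 'k) \<Rightarrow> ('n \<Rightarrow> 'k)" where
  "dot_r m r \<alpha> \<beta> = adstar m (rsharp r \<alpha>) \<beta> - Rstar m (rsharp r \<beta>) \<alpha>"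

definition brk_r :: "(('n::finite \<Rightarrow> 'k::comm_ring_1) \<Rightarrow> ('n \<Rightarrow> 'k) \<Rightarrow> ('n \<Rightarrow> 'k)) \<Rightarrow> ('n \<Rightarrow> 'n \<Rightarrow> 'k) \<Rightarrow> ('n \<Rightarrow> 'k) \<Rightarrow> ('n \<Rightarrow> 'k) \<Rightarrow> ('n \<Rightarrow> 'k)" where
  "brk_r m r \<alpha> \<beta> = Lstar m (rsharp r \<alpha>) \<beta> - Lstar m (rsharp r \<beta>) \<alpha>"

(* L*_a : g -> g,  <L*_a x, b> = - <x, a ._r b> *)
definition Lstar_dual :: "(('n::finite \<Rightarrow> 'k::comm_ring_1) \<Rightarrow> ('n \<Rightarrow> 'k) \<Rightarrow> ('n \<Rightarrow> 'k)) \<Rightarrow> ('n \<Rightarrow> 'n \<Rightarrow> 'k) \<Rightarrow> ('n \<Rightarrow> 'k) \<Rightarrow> ('n \<Rightarrow> 'k) \<Rightarrow> ('n \<Rightarrow> 'k)" where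
  "Lstar_dual m r \<alpha> x = (\<lambda>j. - pair x (dot_r m r \<alpha> (ev j)))"

(* Lie bracket of the phase space g (+) g*, elements written as pairs (x, a) *)
definition bracket_p :: "(('n::finite \<Rightarrow> 'k::comm_ring_1) \<Rightarrow> ('n \<Rightarrow> 'k) \<Rightarrow> ('n \<Rightarrow> 'k)) \<Rightarrow> ('n \<Rightarrow> 'n \<Rightarrow> 'k)
     \<Rightarrow> ('n \<Rightarrow> 'k) \<times> ('n \<Rightarrow> 'k) \<Rightarrow> ('n \<Rightarrow> 'k) \<times> ('n \<Rightarrow> 'k) \<Rightarrow> ('n \<Rightarrow> 'k) \<times> ('n \<Rightarrow> 'k)" where
  "bracket_p m r a b = (case a of (x, \<alpha>) \<Rightarrow> case b of (y, \<beta>) \<Rightarrow>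
     (Lstar_dual m r \<alpha> y - Lstar_dual m r \<beta> x + comm m x y,
      brk_r m r \<alpha> \<beta> + Lstar m x \<beta> - Lstar m y \<alpha>))"

definition tensor_map :: "(('n::finite \<Rightarrow> 'k::comm_ring_1) \<Rightarrow> ('n \<Rightarrow> 'k)) \<Rightarrow> (('n \<Rightarrow> 'k) \<Rightarrow> ('n \<Rightarrow> 'k)) \<Rightarrow> ('n \<Rightarrow> 'n \<Rightarrow> 'k) \<Rightarrow> 'n \<Rightarrow> 'n \<Rightarrow> 'k" where
  "tensor_map f g T = (\<lambda>u v. \<Sum>p\<in>UNIV. \<Sum>q\<in>UNIV. T p q * f (ev p) u * g (ev q) v)"

definition dualmap :: "(('n::finite \<Rightarrow> 'k::comm_ring_1) \<Rightarrow> ('n \<Rightarrow> 'k)) \<Rightarrow> ('n \<Rightarrow> 'k) \<Rightarrow> ('n \<Rightarrow> 'k)" where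
  "dualmap f \<alpha> = (\<lambda>j. pair \<alpha> (f (ev j)))"

definition lie_hom :: "(('n \<Rightarrow> 'k::comm_ring_1) \<Rightarrow> ('n \<Rightarrow> 'k) \<Rightarrow> ('n \<Rightarrow> 'k)) \<Rightarrow> (('n \<Rightarrow> 'k) \<Rightarrow> ('n \<Rightarrow> 'k) \<Rightarrow> ('n \<Rightarrow> 'k)) \<Rightarrow> (('n \<Rightarrow> 'k) \<Rightarrow> ('n \<Rightarrow> 'k)) \<Rightarrow> bool" where
  "lie_hom b1 b2 f \<longleftrightarrow> lin f \<and> (\<forall>x y. f (b1 x y) = b2 (f x) (f y))"

definition lin_pair :: "(('n \<Rightarrow> 'k::comm_ring_1) \<times> ('n \<Rightarrow> 'k) \<Rightarrow> ('n \<Rightarrow> 'k) \<times> ('n \<Rightarrow> 'k)) \<Rightarrow> bool" where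
  "lin_pair F \<longleftrightarrow> (\<forall>a b. F (a + b) = F a + F b) \<and>
     (\<forall>c x \<alpha>. F (smul c x, smul c \<alpha>) = (smul c (fst (F (x, \<alpha>))), smul c (snd (F (x, \<alpha>)))))"

definition lie_hom_pair :: "(('n \<Rightarrow> 'k::comm_ring_1) \<times> ('n \<Rightarrow> 'k) \<Rightarrow> ('n \<Rightarrow> 'k) \<times> ('n \<Rightarrow> 'k) \<Rightarrow> ('n \<Rightarrow> 'k) \<times> ('n \<Rightarrow> 'k))
    \<Rightarrow> (('n \<Rightarrow> 'k) \<times> ('n \<Rightarrow> 'k) \<Rightarrow> ('n \<Rightarrow> 'k) \<times> ('n \<Rightarrow> 'k) \<Rightarrow> ('n \<Rightarrow> 'k) \<times> ('n \<Rightarrow> 'k))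
    \<Rightarrow> (('n \<Rightarrow> 'k) \<times> ('n \<Rightarrow> 'k) \<Rightarrow> ('n \<Rightarrow> 'k) \<times> ('n \<Rightarrow> 'k)) \<Rightarrow> bool" where
  "lie_hom_pair b1 b2 F \<longleftrightarrow> lin_pair F \<and> (\<forall>a b. F (b1 a b) = b2 (F a) (F b))"

definition weak_hom :: "(('n::finite \<Rightarrow> 'k::comm_ring_1) \<Rightarrow> ('n \<Rightarrow> 'k) \<Rightarrow> ('n \<Rightarrow> 'k)) \<Rightarrow> ('n \<Rightarrow> 'n \<Rightarrow> 'k) \<Rightarrow> ('n \<Rightarrow> 'n \<Rightarrow> 'k)
    \<Rightarrow> (('n \<Rightarrow> 'k) \<Rightarrow> ('n \<Rightarrow> 'k)) \<Rightarrow> (('n \<Rightarrow> 'k) \<Rightarrow> ('n \<Rightarrow> 'k)) \<Rightarrow> bool" where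
  "weak_hom m r2 r1 phi vphi \<longleftrightarrow>
     lie_hom (comm m) (comm m) phi \<and> lin vphi \<and>
     tensor_map vphi id r1 = tensor_map id phi r2 \<and>
     (\<forall>x y. vphi (m (phi x) y) = m x (vphi y))"

end

theory Submission
  imports Defs
begin

lemma sum_fun_apply: "(\<Sum>i\<in>A. f i) x = (\<Sum>i\<in>A. f i x)"
  by (induction A rule: infinite_finite_induct) auto

lemma pair_ev_r[simp]: "pair \<alpha> (ev j) = \<alpha> j"
  unfolding pair_def ev_def by (simp add: if_distrib cong: if_cong)

lemma pair_comm: "pair \<alpha> x = pair x \<alpha>"
  unfolding pair_def by (simp add: mult.commute)

lemma pair_ev_l[simp]: "pair (ev j) x = x j"
  by (subst pair_comm) simp

lemma pair_add_l[simp]: "pair (\<alpha> + \<beta>) x = pair \<alpha> x + pair \<beta> x"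
  unfolding pair_def by (simp add: distrib_right sum.distrib)
lemma pair_add_r[simp]: "pair \<alpha> (x + y) = pair \<alpha> x + pair \<alpha> y"
  unfolding pair_def by (simp add: distrib_left sum.distrib)
lemma pair_diff_l[simp]: "pair (\<alpha> - \<beta>) x = pair \<alpha> x - pair \<beta> x"
  unfolding pair_def by (simp add: left_diff_distrib sum_subtractf)
lemma pair_diff_r[simp]: "pair \<alpha> (x - y) = pair \<alpha> x - pair \<alpha> y"
  unfolding pair_def by (simp add: right_diff_distrib sum_subtractf)
lemma pair_minus_l[simp]: "pair (- \<alpha>) x = - pair \<alpha> x"
  unfolding pair_def by (simp add: sum_negf)
lemma pair_minus_r[simp]: "pair \<alpha> (- x) = - pair \<alpha> x"
  unfolding pair_def by (simp add: sum_negf)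
lemma pair_smul_l[simp]: "pair (smul c \<alpha>) x = c * pair \<alpha> x"
  unfolding pair_def smul_def by (simp add: sum_distrib_left mult_ac)
lemma pair_smul_r[simp]: "pair \<alpha> (smul c x) = c * pair \<alpha> x"
  unfolding pair_def smul_def by (simp add: sum_distrib_left mult_ac)

lemma vec_eq_pair:
  fixes \<alpha> \<beta> :: "'n::finite \<Rightarrow> 'k::comm_ring_1"
  assumes "\<And>y. pair \<alpha> y = pair \<beta> y" shows "\<alpha> = \<beta>"
proof
  fix j show "\<alpha> j = \<beta> j" using assms[of "ev j"] by simp
qed

lemma lin_add: "lin f \<Longrightarrow> f (x + y) = f x + f y" unfolding lin_def by blast
lemma lin_smul: "lin f \<Longrightarrow> f (smul c x) = smul c (f x)" unfolding lin_def by blast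
lemma lin_zero: "lin f \<Longrightarrow> f 0 = 0"
  using lin_add[of f 0 0] by simp
lemma lin_minus: "lin f \<Longrightarrow> f (- x) = - f x"
  using lin_add[of f x "-x"] lin_zero[of f] by (simp add: eq_neg_iff_add_eq_0 add.commute)
lemma lin_diff: "lin f \<Longrightarrow> f (x - y) = f x - f y"
  using lin_add[of f x "-y"] lin_minus[of f y] by simp
lemma lin_sum: "lin f \<Longrightarrow> f (\<Sum>i\<in>A. g i) = (\<Sum>i\<in>A. f (g i))"
  by (induction A rule: infinite_finite_induct) (auto simp: lin_zero lin_add)

lemma decomp: "(x::'n::finite \<Rightarrow> 'k::comm_ring_1) = (\<Sum>i\<in>UNIV. smul (x i) (ev i))"
proof
  fix j show "x j = (\<Sum>i\<in>UNIV. smul (x i) (ev i)) j"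
    unfolding sum_fun_apply smul_def ev_def by (simp add: if_distrib cong: if_cong)
qed

lemma lin_expand:
  fixes f :: "('n::finite \<Rightarrow> 'k::comm_ring_1) \<Rightarrow> ('m \<Rightarrow> 'k)"
  assumes "lin f" shows "f x v = (\<Sum>i\<in>UNIV. x i * f (ev i) v)"
proof -
  have "f x = f (\<Sum>i\<in>UNIV. smul (x i) (ev i))" using decomp[of x] by simp
  also have "\<dots> = (\<Sum>i\<in>UNIV. smul (x i) (f (ev i)))" using assms by (simp add: lin_sum lin_smul)
  finally show ?thesis by (simp add: sum_fun_apply smul_def)
qed

lemma pair_lin_expand:
  fixes f :: "('n::finite \<Rightarrow> 'k::comm_ring_1) \<Rightarrow> ('n \<Rightarrow> 'k)"
  assumes "lin f" shows "pair \<alpha> (f x) = (\<Sum>i\<in>UNIV. x i * pair \<alpha> (f (ev i)))"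
proof -
  have "f x = f (\<Sum>i\<in>UNIV. smul (x i) (ev i))" using decomp[of x] by simp
  also have "\<dots> = (\<Sum>i\<in>UNIV. smul (x i) (f (ev i)))" using assms by (simp add: lin_sum lin_smul)
  finally have "pair \<alpha> (f x) = pair \<alpha> (\<Sum>i\<in>UNIV. smul (x i) (f (ev i)))" by simp
  also have "\<dots> = (\<Sum>i\<in>UNIV. x i * pair \<alpha> (f (ev i)))"
    unfolding pair_def sum_fun_apply smul_def
    by (simp add: sum_distrib_left mult_ac) (rule sum.swap)
  finally show ?thesis .
qed

lemma adjoint:
  fixes f :: "('n::finite \<Rightarrow> 'k::comm_ring_1) \<Rightarrow> ('n \<Rightarrow> 'k)"
  assumes "lin f" shows "pair (dualmap f \<alpha>) x = pair \<alpha> (f x)"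
proof -
  have e: "pair \<alpha> (f x) = (\<Sum>i\<in>UNIV. x i * pair \<alpha> (f (ev i)))" by (rule pair_lin_expand[OF assms])
  show ?thesis unfolding e dualmap_def by (subst pair_def) (simp add: mult.commute)
qed

lemma Lstar_eq: "Lstar m x \<alpha> = - dualmap (m x) \<alpha>"
  unfolding Lstar_def dualmap_def by auto
lemma Rstar_eq: "Rstar m x \<alpha> = - dualmap (\<lambda>z. m z x) \<alpha>"
  unfolding Rstar_def dualmap_def by auto
lemma Lstar_dual_eq: "Lstar_dual m r \<alpha> x = - dualmap (dot_r m r \<alpha>) x"
  unfolding Lstar_dual_def dualmap_def by auto

lemma pair_Lstar: "lin (m x) \<Longrightarrow> pair (Lstar m x \<alpha>) y = - pair \<alpha> (m x y)"
  by (simp add: Lstar_eq adjoint)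
lemma pair_Rstar: "lin (\<lambda>z. m z x) \<Longrightarrow> pair (Rstar m x \<alpha>) y = - pair \<alpha> (m y x)"
  using adjoint[of "\<lambda>z. m z x"] by (simp add: Rstar_eq)
lemma pair_adstar: "lin (m x) \<Longrightarrow> lin (\<lambda>z. m z x) \<Longrightarrow> pair (adstar m x \<alpha>) y = - pair \<alpha> (comm m x y)"
  by (simp add: adstar_def pair_Lstar pair_Rstar comm_def)
lemma pair_Lstar_dual: "lin (dot_r m r \<alpha>) \<Longrightarrow> pair (Lstar_dual m r \<alpha> x) \<beta> = - pair x (dot_r m r \<alpha> \<beta>)"
  by (simp add: Lstar_dual_eq adjoint)

lemma smul_apply[simp]: "smul c x j = c * x j"
  by (simp add: smul_def)

lemma lin_dualmap: "lin (dualmap f)"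
  unfolding lin_def dualmap_def by (auto simp: fun_eq_iff)

lemma rsharp_add: "rsharp r (\<alpha> + \<beta>) = rsharp r \<alpha> + rsharp r \<beta>"
  unfolding rsharp_def by (auto simp: fun_eq_iff distrib_right sum.distrib)
lemma rsharp_smul: "rsharp r (smul c \<alpha>) = smul c (rsharp r \<alpha>)"
  unfolding rsharp_def smul_def by (auto simp: fun_eq_iff sum_distrib_left mult_ac)

lemma lin_dot:
  fixes m :: "('n::finite \<Rightarrow> 'k::comm_ring_1) \<Rightarrow> ('n \<Rightarrow> 'k) \<Rightarrow> ('n \<Rightarrow> 'k)"
  assumes "bilin m" shows "lin (dot_r m r \<alpha>)"
proof -
  have l: "\<And>x. lin (m x)" using assms unfolding bilin_def by blast
  have f: "\<And>\<beta> j. dot_r m r \<alpha> \<beta> j = - pair \<beta> (m (rsharp r \<alpha>) (ev j)) + pair \<beta> (m (ev j) (rsharp r \<alpha>))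
       + pair \<alpha> (m (ev j) (rsharp r \<beta>))"
    by (simp add: dot_r_def adstar_def Lstar_def Rstar_def)
  show ?thesis unfolding lin_def
  proof (intro conjI allI)
    fix x y show "dot_r m r \<alpha> (x + y) = dot_r m r \<alpha> x + dot_r m r \<alpha> y"
    proof
      fix j show "dot_r m r \<alpha> (x + y) j = (dot_r m r \<alpha> x + dot_r m r \<alpha> y) j"
        by (simp only: f plus_fun_apply rsharp_add lin_add[OF l] pair_add_l pair_add_r) (simp add: algebra_simps)
    qed
  next
    fix c x show "dot_r m r \<alpha> (smul c x) = smul c (dot_r m r \<alpha> x)"
    proof
      fix j show "dot_r m r \<alpha> (smul c x) j = smul c (dot_r m r \<alpha> x) j"
        by (simp only: f smul_apply rsharp_smul lin_smul[OF l] pair_smul_l pair_smul_r) (simp add: algebra_simps)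
    qed
  qed
qed

lemma ev_flip: "ev q v = (if q = v then 1 else 0)"
  unfolding ev_def by auto
lemma sum_ev: "(\<Sum>q\<in>UNIV. (a::'n::finite \<Rightarrow> _) q * ev q v) = (a v :: 'k::comm_ring_1)"
proof -
  have "(\<Sum>q\<in>UNIV. a q * ev q v) = (\<Sum>q\<in>UNIV. if q = v then a q else 0)"
    by (rule sum.cong) (auto simp: ev_flip)
  then show ?thesis by simp
qed
lemma sum_ev': "(\<Sum>q\<in>UNIV. (a::'n::finite \<Rightarrow> _) q * ev q v * b q) = (a v * b v :: 'k::comm_ring_1)"
proof -
  have "(\<Sum>q\<in>UNIV. a q * ev q v * b q) = (\<Sum>q\<in>UNIV. if q = v then a q * b q else 0)"
    by (rule sum.cong) (auto simp: ev_flip)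
  then show ?thesis by simp
qed

lemma adjoint_r:
  fixes f :: "('n::finite \<Rightarrow> 'k::comm_ring_1) \<Rightarrow> ('n \<Rightarrow> 'k)"
  assumes "lin f" shows "pair \<alpha> (f x) = pair (dualmap f \<alpha>) x"
  using adjoint[OF assms] by simp

lemma tensor_E:
  fixes r1 r2 :: "'n::finite \<Rightarrow> 'n \<Rightarrow> 'k::comm_ring_1"
  assumes "tensor_map vphi id r1 = tensor_map id phi r2"
  shows "(\<Sum>p\<in>UNIV. r1 p v * vphi (ev p) u) = (\<Sum>q\<in>UNIV. r2 u q * phi (ev q) v)"
proof -
  have "tensor_map vphi id r1 u v = tensor_map id phi r2 u v" using assms by simp
  moreover have "tensor_map vphi id r1 u v = (\<Sum>p\<in>UNIV. r1 p v * vphi (ev p) u)"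
    unfolding tensor_map_def by (simp add: sum_ev)
  moreover have "tensor_map id phi r2 u v = (\<Sum>q\<in>UNIV. \<Sum>p\<in>UNIV. r2 p q * ev p u * phi (ev q) v)"
    unfolding tensor_map_def by (simp, rule sum.swap)
  moreover have "\<dots> = (\<Sum>q\<in>UNIV. r2 u q * phi (ev q) v)"
    by (simp add: sum_ev')
  ultimately show ?thesis by simp
qed

lemma K0:
  fixes r1 r2 :: "'n::finite \<Rightarrow> 'n \<Rightarrow> 'k::comm_ring_1"
  assumes E: "\<And>u v. (\<Sum>p\<in>UNIV. r1 p v * vphi (ev p) u) = (\<Sum>q\<in>UNIV. r2 u q * phi (ev q) v)"
    and lphi: "lin phi"
  shows "rsharp r1 (dualmap vphi \<alpha>) = phi (rsharp r2 \<alpha>)"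
proof
  fix v
  have "rsharp r1 (dualmap vphi \<alpha>) v = (\<Sum>i\<in>UNIV. \<Sum>u\<in>UNIV. \<alpha> u * (r1 i v * vphi (ev i) u))"
    by (simp add: rsharp_def dualmap_def pair_def sum_distrib_right sum_distrib_left mult_ac)
  also have "\<dots> = (\<Sum>u\<in>UNIV. \<Sum>i\<in>UNIV. \<alpha> u * (r1 i v * vphi (ev i) u))" by (rule sum.swap)
  also have "\<dots> = (\<Sum>u\<in>UNIV. \<alpha> u * (\<Sum>i\<in>UNIV. r1 i v * vphi (ev i) u))" by (simp add: sum_distrib_left)
  also have "\<dots> = (\<Sum>u\<in>UNIV. \<alpha> u * (\<Sum>q\<in>UNIV. r2 u q * phi (ev q) v))" using E by simp
  also have "\<dots> = (\<Sum>u\<in>UNIV. \<Sum>q\<in>UNIV. \<alpha> u * r2 u q * phi (ev q) v)" by (simp add: sum_distrib_left mult_ac)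
  also have "\<dots> = (\<Sum>q\<in>UNIV. \<Sum>u\<in>UNIV. \<alpha> u * r2 u q * phi (ev q) v)" by (rule sum.swap)
  also have "\<dots> = (\<Sum>q\<in>UNIV. (\<Sum>u\<in>UNIV. \<alpha> u * r2 u q) * phi (ev q) v)" by (simp add: sum_distrib_right)
  also have "\<dots> = phi (rsharp r2 \<alpha>) v" by (subst lin_expand[OF lphi, of "rsharp r2 \<alpha>" v]) (simp add: rsharp_def)
  finally show "rsharp r1 (dualmap vphi \<alpha>) v = phi (rsharp r2 \<alpha>) v" .
qed

lemma K0':
  fixes r1 r2 :: "'n::finite \<Rightarrow> 'n \<Rightarrow> 'k::comm_ring_1"
  assumes E: "\<And>u v. (\<Sum>p\<in>UNIV. r1 p v * vphi (ev p) u) = (\<Sum>q\<in>UNIV. r2 u q * phi (ev q) v)"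
    and lvphi: "lin vphi" and s1: "symm r1" and s2: "symm r2"
  shows "vphi (rsharp r1 \<gamma>) = rsharp r2 (dualmap phi \<gamma>)"
proof
  fix u
  have rs: "\<And>p. rsharp r1 \<gamma> p = (\<Sum>v\<in>UNIV. \<gamma> v * r1 p v)"
    unfolding rsharp_def by (rule sum.cong[OF refl]) (metis s1 symm_def)
  have rs2: "\<And>q. r2 q u = r2 u q" by (metis s2 symm_def)
  have "vphi (rsharp r1 \<gamma>) u = (\<Sum>p\<in>UNIV. (\<Sum>v\<in>UNIV. \<gamma> v * r1 p v) * vphi (ev p) u)"
    by (simp add: lin_expand[OF lvphi, of "rsharp r1 \<gamma>" u] rs)
  also have "\<dots> = (\<Sum>p\<in>UNIV. \<Sum>v\<in>UNIV. \<gamma> v * (r1 p v * vphi (ev p) u))"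
    by (simp add: sum_distrib_right sum_distrib_left mult_ac)
  also have "\<dots> = (\<Sum>v\<in>UNIV. \<Sum>p\<in>UNIV. \<gamma> v * (r1 p v * vphi (ev p) u))" by (rule sum.swap)
  also have "\<dots> = (\<Sum>v\<in>UNIV. \<gamma> v * (\<Sum>p\<in>UNIV. r1 p v * vphi (ev p) u))" by (simp add: sum_distrib_left)
  also have "\<dots> = (\<Sum>v\<in>UNIV. \<gamma> v * (\<Sum>q\<in>UNIV. r2 u q * phi (ev q) v))" using E by simp
  also have "\<dots> = (\<Sum>v\<in>UNIV. \<Sum>q\<in>UNIV. \<gamma> v * phi (ev q) v * r2 u q)" by (simp add: sum_distrib_left mult_ac)
  also have "\<dots> = (\<Sum>q\<in>UNIV. \<Sum>v\<in>UNIV. \<gamma> v * phi (ev q) v * r2 u q)" by (rule sum.swap)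
  also have "\<dots> = (\<Sum>q\<in>UNIV. (\<Sum>v\<in>UNIV. \<gamma> v * phi (ev q) v) * r2 q u)"
    by (rule sum.cong[OF refl], subst rs2, simp add: sum_distrib_right)
  also have "\<dots> = rsharp r2 (dualmap phi \<gamma>) u" by (simp add: rsharp_def dualmap_def pair_def)
  finally show "vphi (rsharp r1 \<gamma>) u = rsharp r2 (dualmap phi \<gamma>) u" .
qed

theorem proposition5p6:
  fixes m :: "('n::finite \<Rightarrow> 'k::field_char_0) \<Rightarrow> ('n \<Rightarrow> 'k) \<Rightarrow> ('n \<Rightarrow> 'k)"
    and r1 r2 :: "'n \<Rightarrow> 'n \<Rightarrow> 'k"
    and phi vphi :: "('n \<Rightarrow> 'k) \<Rightarrow> ('n \<Rightarrow> 'k)"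
  assumes "preLie m"
    and "symm r1" and "symm r2"
    and "smatrix m r1" and "smatrix m r2"
    and "weak_hom m r2 r1 phi vphi"
  shows "lie_hom (brk_r m r2) (brk_r m r1) (dualmap vphi)
       \<and> lie_hom_pair (bracket_p m r2) (bracket_p m r1) (\<lambda>(x, \<alpha>). (phi x, dualmap vphi \<alpha>))"
proof -
  have bl: "bilin m" using assms(1) unfolding preLie_def by blast
  have lm: "\<And>x. lin (m x)" and rm: "\<And>y. lin (\<lambda>x. m x y)" using bl unfolding bilin_def by blast+
  have lphi: "lin phi" and hom: "\<And>x y. phi (comm m x y) = comm m (phi x) (phi y)"
    and lvphi: "lin vphi" and tens: "tensor_map vphi id r1 = tensor_map id phi r2"
    and mix: "\<And>x y. vphi (m (phi x) y) = m x (vphi y)"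
    using assms(6) unfolding weak_hom_def lie_hom_def by blast+
  note E = tensor_E[OF tens]
  have K0: "\<And>\<alpha>. rsharp r1 (dualmap vphi \<alpha>) = phi (rsharp r2 \<alpha>)" by (rule K0[OF E lphi])
  have K0': "\<And>\<gamma>. vphi (rsharp r1 \<gamma>) = rsharp r2 (dualmap phi \<gamma>)"
    by (rule K0'[OF E lvphi assms(2) assms(3)])
  have K1: "\<And>x \<beta>. dualmap vphi (Lstar m x \<beta>) = Lstar m (phi x) (dualmap vphi \<beta>)"
  proof (rule vec_eq_pair)
    fix x \<beta> y
    show "pair (dualmap vphi (Lstar m x \<beta>)) y = pair (Lstar m (phi x) (dualmap vphi \<beta>)) y"
      by (simp add: adjoint[OF lvphi] pair_Lstar[OF lm] adjoint_r[OF lvphi, symmetric] mix)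
  qed
  have P1: "\<And>\<alpha> \<beta>. dualmap vphi (brk_r m r2 \<alpha> \<beta>) = brk_r m r1 (dualmap vphi \<alpha>) (dualmap vphi \<beta>)"
    by (simp add: brk_r_def lin_diff[OF lin_dualmap] K1 K0)
  have K4: "\<And>x \<gamma>. dualmap phi (adstar m (phi x) \<gamma>) = adstar m x (dualmap phi \<gamma>)"
  proof (rule vec_eq_pair)
    fix x \<gamma> y
    show "pair (dualmap phi (adstar m (phi x) \<gamma>)) y = pair (adstar m x (dualmap phi \<gamma>)) y"
      by (simp add: adjoint[OF lphi] pair_adstar[OF lm rm] hom[symmetric] adjoint_r[OF lphi, symmetric])
  qed
  have K5: "\<And>\<gamma> \<alpha>. dualmap phi (Rstar m (rsharp r1 \<gamma>) (dualmap vphi \<alpha>)) = Rstar m (rsharp r2 (dualmap phi \<gamma>)) \<alpha>"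
  proof (rule vec_eq_pair)
    fix \<gamma> \<alpha> y
    show "pair (dualmap phi (Rstar m (rsharp r1 \<gamma>) (dualmap vphi \<alpha>))) y = pair (Rstar m (rsharp r2 (dualmap phi \<gamma>)) \<alpha>) y"
      by (simp add: adjoint[OF lphi] adjoint[OF lvphi] pair_Rstar[OF rm] mix K0')
  qed
  have K3: "\<And>\<alpha> \<gamma>. dualmap phi (dot_r m r1 (dualmap vphi \<alpha>) \<gamma>) = dot_r m r2 \<alpha> (dualmap phi \<gamma>)"
    by (simp add: dot_r_def lin_diff[OF lin_dualmap] K0 K4 K5)
  have K2: "\<And>\<alpha> y. phi (Lstar_dual m r2 \<alpha> y) = Lstar_dual m r1 (dualmap vphi \<alpha>) (phi y)"
  proof (rule vec_eq_pair)
    fix \<alpha> y \<gamma>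
    have "pair \<gamma> (phi (Lstar_dual m r2 \<alpha> y)) = pair (Lstar_dual m r2 \<alpha> y) (dualmap phi \<gamma>)"
      by (simp add: adjoint_r[OF lphi] pair_comm)
    also have "\<dots> = - pair y (dot_r m r2 \<alpha> (dualmap phi \<gamma>))" by (rule pair_Lstar_dual[OF lin_dot[OF bl]])
    also have "\<dots> = - pair (dot_r m r1 (dualmap vphi \<alpha>) \<gamma>) (phi y)"
    proof -
      have "pair y (dualmap phi (dot_r m r1 (dualmap vphi \<alpha>) \<gamma>)) = pair (phi y) (dot_r m r1 (dualmap vphi \<alpha>) \<gamma>)"
        using adjoint[OF lphi, of "dot_r m r1 (dualmap vphi \<alpha>) \<gamma>" y] pair_comm by metis
      then show ?thesis by (simp add: K3[symmetric] pair_comm[of "phi y"])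
    qed
    also have "\<dots> = pair \<gamma> (Lstar_dual m r1 (dualmap vphi \<alpha>) (phi y))"
      by (simp add: pair_Lstar_dual[OF lin_dot[OF bl]] pair_comm[of \<gamma>] pair_comm[of "phi y"])
    finally show "pair (phi (Lstar_dual m r2 \<alpha> y)) \<gamma> = pair (Lstar_dual m r1 (dualmap vphi \<alpha>) (phi y)) \<gamma>"
      by (simp add: pair_comm[of _ \<gamma>])
  qed
  have A: "lie_hom (brk_r m r2) (brk_r m r1) (dualmap vphi)"
    unfolding lie_hom_def using lin_dualmap P1 by blast
  have B: "lin_pair (\<lambda>(x, \<alpha>). (phi x, dualmap vphi \<alpha>))"
    unfolding lin_pair_def
  proof (intro conjI allI)
    fix a b :: "('n \<Rightarrow> 'k) \<times> ('n \<Rightarrow> 'k)"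
    show "(case a + b of (x, \<alpha>) \<Rightarrow> (phi x, dualmap vphi \<alpha>)) =
          (case a of (x, \<alpha>) \<Rightarrow> (phi x, dualmap vphi \<alpha>)) + (case b of (x, \<alpha>) \<Rightarrow> (phi x, dualmap vphi \<alpha>))"
      by (cases a; cases b) (simp add: lin_add[OF lphi] lin_add[OF lin_dualmap])
  next
    fix c x \<alpha>
    show "(case (smul c x, smul c \<alpha>) of (x, \<alpha>) \<Rightarrow> (phi x, dualmap vphi \<alpha>)) =
       (smul c (fst (case (x, \<alpha>) of (x, \<alpha>) \<Rightarrow> (phi x, dualmap vphi \<alpha>))),
        smul c (snd (case (x, \<alpha>) of (x, \<alpha>) \<Rightarrow> (phi x, dualmap vphi \<alpha>))))"
      by (simp add: lin_smul[OF lphi] lin_smul[OF lin_dualmap])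
  qed
  have C: "\<forall>a b. (\<lambda>(x, \<alpha>). (phi x, dualmap vphi \<alpha>)) (bracket_p m r2 a b) =
      bracket_p m r1 ((\<lambda>(x, \<alpha>). (phi x, dualmap vphi \<alpha>)) a) ((\<lambda>(x, \<alpha>). (phi x, dualmap vphi \<alpha>)) b)"
  proof (intro allI)
    fix a b :: "('n \<Rightarrow> 'k) \<times> ('n \<Rightarrow> 'k)"
    obtain x \<alpha> where a: "a = (x, \<alpha>)" by (cases a)
    obtain y \<beta> where b: "b = (y, \<beta>)" by (cases b)
    show "(\<lambda>(x, \<alpha>). (phi x, dualmap vphi \<alpha>)) (bracket_p m r2 a b) =
      bracket_p m r1 ((\<lambda>(x, \<alpha>). (phi x, dualmap vphi \<alpha>)) a) ((\<lambda>(x, \<alpha>). (phi x, dualmap vphi \<alpha>)) b)"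
      unfolding a b bracket_p_def
      by (simp add: lin_add[OF lphi] lin_diff[OF lphi] lin_add[OF lin_dualmap] lin_diff[OF lin_dualmap]
          K2 hom P1 K1)
  qed
  show ?thesis using A B C unfolding lie_hom_pair_def by blast
qed

end
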